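(* For all multidistributions $\mu,\nu$ on configurations, real $w\ge0$, expectation $f$ and $c\in\{\mathit{true},\mathit{false}\}$: if $\mu\Rightarrow_w\nu$ (one step of the lifted relation on multidistributions), then \[ \mathbb{E}_\mu(e_c(f)) \;\ge\; [c]\cdot w + \mathbb{E}_\nu(e_c(f)). \]
   Context: Let $\mathrm{Var}$ be a finite set of integer-valued variables and $\Sigma = \mathrm{Var}\to\mathbb{Z}$ the set of stores; $\sigma[x\mapsto i]$ is the store updated at $x$. Boolean expressions $\varphi$ are evaluated on stores ($\sigma\models\varphi$). A distribution expression $d$ assigns to each store $\sigma$ a probability distribution $d(\sigma)$ on $\mathbb{Z}$. Commands: $C,D ::= \mathtt{skip} \mid \mathtt{tick}(r) \mid \mathtt{halt} \mid x :\approx d \mid \mathtt{if}_{[\psi]}(\varphi)\{C\}\{D\} \mid \mathtt{while}_{[\psi]}(\varphi)\{C\} \mid C \,\square\, D \mid C \oplus_p D \mid C;D$, with $r$ a nonnegative rational, $p\in[0,1]$. Expectations are functions $f:\Sigma\to[0,\infty]$, with pointwise operations, $\mathbf{r}$ the constant $r$, $[\varphi](\sigma)\in\{0,1\}$ the indicator, $[c]=1$ if $c=\mathit{true}$ and $0$ otherwise, $0\cdot\infty=0$. Transformer $\mathsf{et}_c$: $\mathsf{et}_c[\mathtt{skip}](f)=f$; $\mathsf{et}_c[\mathtt{tick}(r)](f)=[c]\cdot\mathbf{r}+f$; $\mathsf{et}_c[\mathtt{halt}](f)=\mathbf{0}$; $\mathsf{et}_c[x:\approx d](f)=\lambda\sigma.\sum_{i}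 d(\sigma)(i)\, f(\sigma[x\mapsto i])$; $\mathsf{et}_c[\mathtt{if}_{[\psi]}(\varphi)\{C\}\{D\}](f)=[\psi\wedge\varphi]\cdot\mathsf{et}_c[C](f)+[\psi\wedge\neg\varphi]\cdot\mathsf{et}_c[D](f)$; $\mathsf{et}_c[\mathtt{while}_{[\psi]}(\varphi)\{C\}](f)=\mathrm{lfp}\,F.\ [\psi\wedge\varphi]\cdot\mathsf{et}_c[C](F)+[\psi\wedge\neg\varphi]\cdot f$ (least fixed point, pointwise order); $\mathsf{et}_c[C\,\square\,D](f)=\max(\mathsf{et}_c[C](f),\mathsf{et}_c[D](f))$; $\mathsf{et}_c[C\oplus_p D](f)=\mathbf{p}\cdot\mathsf{et}_c[C](f)+\mathbf{(1-p)}\cdot\mathsf{et}_c[D](f)$; $\mathsf{et}_c[C;D](f)=\mathsf{et}_c[C](\mathsf{et}_c[D](f))$. Configurations: $\mathrm{Conf}=(\mathrm{Cmd}\times\Sigma)\cup\Sigma\cup\{\bot\}$; an active configuration is written $\langle C,\sigma\rangle$. A multidistribution on a set $A$ is a countable multiset $\mu$ of pairs $q:a$ with $a\in A$, $0<q\le1$, and $\sum_{q:a\in\mu}q\le1$; $\mathbb{E}_\mu(g)=\sum_{q:a\in\mu}q\cdot g(a)$ (with multiplicity). For $0<p\le1$, $p\cdot\{q_i:a_i\}_i=\{p q_i:a_i\}_i$, and for a countable family with $p_i>0$, $\sum_ip_i\le1$, $\biguplus_i p_i\cdot\mu_i$ is the multiset union of the $p_i\cdot\mu_i$. For $h:A\to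 B$, $\overline h(\{q_i:a_i\}_i)=\{q_i:h(a_i)\}_i$. A configuration $\gamma$ is identified with $\{1:\gamma\}$; entries with probability $0$ are omitted. The one-step relation $\gamma\to_w\mu$ is the least relation closed under: $\langle\mathtt{skip},\sigma\rangle\to_0\sigma$; $\langle\mathtt{tick}(r),\sigma\rangle\to_r\sigma$; $\langle\mathtt{halt},\sigma\rangle\to_0\bot$; $\langle x:\approx d,\sigma\rangle\to_0\{d(\sigma)(i):\sigma[x\mapsto i]\mid d(\sigma)(i)>0\}$; $\langle\mathtt{if}_{[\psi]}(\varphi)\{C\}\{D\},\sigma\rangle\to_0\langle C,\sigma\rangle$ if $\sigma\models\psi\wedge\varphi$, $\to_0\langle D,\sigma\rangle$ if $\sigma\models\psi\wedge\neg\varphi$, $\to_0\bot$ if $\sigma\models\neg\psi$; $\langle\mathtt{while}_{[\psi]}(\varphi)\{C\},\sigma\rangle\to_0\langle C;\mathtt{while}_{[\psi]}(\varphi)\{C\},\sigma\rangle$ if $\sigma\models\psi\wedge\varphi$, $\to_0\sigma$ if $\sigma\models\psi\wedge\neg\varphi$, $\to_0\bot$ if $\sigma\models\neg\psi$; $\langle C\,\square\,D,\sigma\rangle\to_0\langle C,\sigma\rangle$ and $\to_0\langle D,\sigma\rangle$; $\langle C\oplus_pD,\sigma\rangle\to_0\{p:\langle C,\sigma\rangle,1-p:\langle D,\sigma\rangle\}$; if $\langle C,\sigma\rangle\to_r\mu$ then $\langle C;D,\sigma\rangle\to_r\overline{\kappa_D}(\mu)$, where $\kappa_D(\langle C',\sigma'\rangle)=\langle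 C';D,\sigma'\rangle$, $\kappa_D(\sigma')=\langle D,\sigma'\rangle$, $\kappa_D(\bot)=\bot$. The lifted relation $\mu\Rightarrow_w\nu$ on multidistributions is the least relation with: $\mu\Rightarrow_0\mu$; $\{1:\gamma\}\Rightarrow_w\mu$ whenever $\gamma\to_w\mu$; and if $\mu_i\Rightarrow_{w_i}\nu_i$ for all $i$ in a countable index set $I$, $p_i>0$, $\sum_ip_i\le1$, then $\biguplus_ip_i\cdot\mu_i\Rightarrow_{w}\biguplus_ip_i\cdot\nu_i$ with $w=\sum_ip_iw_i$. For an expectation $f$, $e_c(f):\mathrm{Conf}\to[0,\infty]$ is defined by $e_c(f)(\langle C,\sigma\rangle)=\mathsf{et}_c[C](f)(\sigma)$, $e_c(f)(\sigma)=f(\sigma)$, $e_c(f)(\bot)=0$. *)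

theory Defs
  imports "HOL-Analysis.Analysis" "HOL-Probability.Probability_Mass_Function"
begin

type_synonym 'v store = "'v \<Rightarrow> int"

datatype 'v cmd =
    Skip
  | Tick rat
  | Halt
  | Assign 'v "'v store \<Rightarrow> int pmf"
  | If "'v store \<Rightarrow> bool" "'v store \<Rightarrow> bool" "'v cmd" "'v cmd"
  | While "'v store \<Rightarrow> bool" "'v store \<Rightarrow> bool" "'v cmd"
  | NDet "'v cmd" "'v cmd"
  | PChoice "'v cmd" real "'v cmd"
  | Seq "'v cmd" "'v cmd"

fun wf_cmd :: "'v cmd \<Rightarrow> bool" where
  "wf_cmd Skip = True"
| "wf_cmd (Tick r) = (r \<ge> 0)"
| "wf_cmd Halt = True"
| "wf_cmd (Assign x d) = True"
| "wf_cmd (If \<psi> \<phi> C D) = (wf_cmd C \<and> wf_cmd D)"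
| "wf_cmd (While \<psi> \<phi> C) = wf_cmd C"
| "wf_cmd (NDet C D) = (wf_cmd C \<and> wf_cmd D)"
| "wf_cmd (PChoice C p D) = (0 \<le> p \<and> p \<le> 1 \<and> wf_cmd C \<and> wf_cmd D)"
| "wf_cmd (Seq C D) = (wf_cmd C \<and> wf_cmd D)"

type_synonym 'v expect = "'v store \<Rightarrow> ennreal"

definition ind :: "bool \<Rightarrow> ennreal" where
  "ind b = (if b then 1 else 0)"

primrec et :: "bool \<Rightarrow> 'v cmd \<Rightarrow> 'v expect \<Rightarrow> 'v expect" where
  "et c Skip f = f"
| "et c (Tick r) f = (\<lambda>\<sigma>. ind c * ennreal (real_of_rat r) + f \<sigma>)"
| "et c Halt f = (\<lambda>\<sigma>. 0)"
| "et c (Assign x d) f =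
     (\<lambda>\<sigma>. \<Sum>\<^sub>\<infinity> i. ennreal (pmf (d \<sigma>) i) * f (\<sigma>(x := i)))"
| "et c (If \<psi> \<phi> C D) f =
     (\<lambda>\<sigma>. ind (\<psi> \<sigma> \<and> \<phi> \<sigma>) * et c C f \<sigma> + ind (\<psi> \<sigma> \<and> \<not> \<phi> \<sigma>) * et c D f \<sigma>)"
| "et c (While \<psi> \<phi> C) f =
     lfp (\<lambda>F. \<lambda>\<sigma>. ind (\<psi> \<sigma> \<and> \<phi> \<sigma>) * et c C F \<sigma> + ind (\<psi> \<sigma> \<and> \<not> \<phi> \<sigma>) * f \<sigma>)"
| "et c (NDet C D) f = (\<lambda>\<sigma>. max (et c C f \<sigma>) (et c D f \<sigma>))"
| "et c (PChoice C p D) f =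
     (\<lambda>\<sigma>. ennreal p * et c C f \<sigma> + ennreal (1 - p) * et c D f \<sigma>)"
| "et c (Seq C D) f = et c C (et c D f)"

datatype 'v conf = Active "'v cmd" "'v store" | Term "'v store" | Bot

fun wf_conf :: "'v conf \<Rightarrow> bool" where
  "wf_conf (Active C \<sigma>) = wf_cmd C"
| "wf_conf (Term \<sigma>) = True"
| "wf_conf Bot = True"

text \<open>A countable multiset of pairs q:a is represented by its multiplicity function
  (each pair has finite multiplicity since q > 0 and the total mass is at most 1).\<close>
type_synonym 'a md = "real \<times> 'a \<Rightarrow> nat"

definition is_mdist :: "'a md \<Rightarrow> bool" where
  "is_mdist m \<longleftrightarrow>
     (\<forall>q a. m (q, a) > 0 \<longrightarrow> 0 < q \<and> q \<le> 1) \<and>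
     (\<lambda>x. real (m x) * fst x) summable_on UNIV \<and>
     (\<Sum>\<^sub>\<infinity> x. real (m x) * fst x) \<le> 1"

definition mdist_conf :: "'v conf md \<Rightarrow> bool" where
  "mdist_conf m \<longleftrightarrow> is_mdist m \<and> (\<forall>q a. m (q, a) > 0 \<longrightarrow> wf_conf a)"

definition md_exp :: "'a md \<Rightarrow> ('a \<Rightarrow> ennreal) \<Rightarrow> ennreal" where
  "md_exp m g = (\<Sum>\<^sub>\<infinity> x. of_nat (m x) * ennreal (fst x) * g (snd x))"

definition md_unit :: "'a \<Rightarrow> 'a md" where
  "md_unit a = (\<lambda>(q, b). if q = 1 \<and> b = a then 1 else 0)"

definition md_pair :: "real \<Rightarrow> 'a \<Rightarrow> 'a \<Rightarrow> 'a md" where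
  "md_pair p a b = (\<lambda>(q, x).
     (if p > 0 \<and> q = p \<and> x = a then 1 else 0) +
     (if 1 - p > 0 \<and> q = 1 - p \<and> x = b then 1 else 0))"

definition md_map :: "('a \<Rightarrow> 'b) \<Rightarrow> 'a md \<Rightarrow> 'b md" where
  "md_map h m = (\<lambda>(q, b). \<Sum>\<^sub>\<infinity> a\<in>{a. h a = b}. m (q, a))"

text \<open>\<open>\<Uplus>\<^sub>i\<in>I p\<^sub>i \<cdot> \<mu>\<^sub>i\<close>: the entry q:a of \<open>\<mu>\<^sub>i\<close> becomes \<open>p\<^sub>i q : a\<close>.\<close>
definition md_union :: "nat set \<Rightarrow> (nat \<Rightarrow> real) \<Rightarrow> (nat \<Rightarrow> 'a md) \<Rightarrow> 'a md" where
  "md_union I p M = (\<lambda>(q, a). \<Sum>\<^sub>\<infinity> i\<in>I. M i (q / p i, a))"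

fun kappa :: "'v cmd \<Rightarrow> 'v conf \<Rightarrow> 'v conf" where
  "kappa D (Active C' \<sigma>') = Active (Seq C' D) \<sigma>'"
| "kappa D (Term \<sigma>') = Active D \<sigma>'"
| "kappa D Bot = Bot"

inductive cstep :: "'v conf \<Rightarrow> real \<Rightarrow> 'v conf md \<Rightarrow> bool" where
  skip: "cstep (Active Skip \<sigma>) 0 (md_unit (Term \<sigma>))"
| tick: "cstep (Active (Tick r) \<sigma>) (real_of_rat r) (md_unit (Term \<sigma>))"
| halt: "cstep (Active Halt \<sigma>) 0 (md_unit Bot)"
| assign: "cstep (Active (Assign x d) \<sigma>) 0
     (\<lambda>(q, a). card {i. pmf (d \<sigma>) i > 0 \<and> q = pmf (d \<sigma>) i \<and> a = Term (\<sigma>(x := i))})"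
| if_t: "\<psi> \<sigma> \<and> \<phi> \<sigma> \<Longrightarrow> cstep (Active (If \<psi> \<phi> C D) \<sigma>) 0 (md_unit (Active C \<sigma>))"
| if_f: "\<psi> \<sigma> \<and> \<not> \<phi> \<sigma> \<Longrightarrow> cstep (Active (If \<psi> \<phi> C D) \<sigma>) 0 (md_unit (Active D \<sigma>))"
| if_bot: "\<not> \<psi> \<sigma> \<Longrightarrow> cstep (Active (If \<psi> \<phi> C D) \<sigma>) 0 (md_unit Bot)"
| while_t: "\<psi> \<sigma> \<and> \<phi> \<sigma> \<Longrightarrow>
     cstep (Active (While \<psi> \<phi> C) \<sigma>) 0 (md_unit (Active (Seq C (While \<psi> \<phi> C)) \<sigma>))"
| while_f: "\<psi> \<sigma> \<and> \<not> \<phi> \<sigma> \<Longrightarrow> cstep (Active (While \<psi> \<phi> C) \<sigma>) 0 (md_unit (Term \<sigma>))"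
| while_bot: "\<not> \<psi> \<sigma> \<Longrightarrow> cstep (Active (While \<psi> \<phi> C) \<sigma>) 0 (md_unit Bot)"
| ndet_l: "cstep (Active (NDet C D) \<sigma>) 0 (md_unit (Active C \<sigma>))"
| ndet_r: "cstep (Active (NDet C D) \<sigma>) 0 (md_unit (Active D \<sigma>))"
| pchoice: "cstep (Active (PChoice C p D) \<sigma>) 0 (md_pair p (Active C \<sigma>) (Active D \<sigma>))"
| seq: "cstep (Active C \<sigma>) r \<mu> \<Longrightarrow> cstep (Active (Seq C D) \<sigma>) r (md_map (kappa D) \<mu>)"

inductive lstep :: "'v conf md \<Rightarrow> real \<Rightarrow> 'v conf md \<Rightarrow> bool" where
  refl: "is_mdist \<mu> \<Longrightarrow> lstep \<mu> 0 \<mu>"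
| single: "cstep \<gamma> w \<mu> \<Longrightarrow> lstep (md_unit \<gamma>) w \<mu>"
| union: "\<lbrakk>\<forall>i\<in>I. lstep (M i) (W i) (N i); \<forall>i\<in>I. p i > 0;
           p summable_on I; (\<Sum>\<^sub>\<infinity> i\<in>I. p i) \<le> 1;
           ((\<lambda>i. p i * W i) has_sum w) I\<rbrakk>
          \<Longrightarrow> lstep (md_union I p M) w (md_union I p N)"

fun econf :: "bool \<Rightarrow> 'v expect \<Rightarrow> 'v conf \<Rightarrow> ennreal" where
  "econf c f (Active C \<sigma>) = et c C f \<sigma>"
| "econf c f (Term \<sigma>) = f \<sigma>"
| "econf c f Bot = 0"

end

theory Submission
  imports Defs
begin


lemma ennreal_summable[simp]: "(f::_ \<Rightarrow> ennreal) summable_on A"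
  by (simp add: nonneg_summable_on_complete)

lemma ennreal_infsum_sup: "infsum (f::_ \<Rightarrow> ennreal) A = (SUP F\<in>{F. finite F \<and> F \<subseteq> A}. sum f F)"
  by (rule nonneg_infsum_complete) simp

lemma ennreal_infsum_cmult_left: "infsum (\<lambda>x. c * (f x :: ennreal)) A = c * infsum f A"
  unfolding ennreal_infsum_sup by (simp add: SUP_mult_left_ennreal sum_distrib_left)

lemma ennreal_infsum_cmult_right: "infsum (\<lambda>x. (f x :: ennreal) * c) A = infsum f A * c"
  using ennreal_infsum_cmult_left[of c f A] by (simp add: mult.commute)

lemma ennreal_sum_le_infsum: "finite F \<Longrightarrow> F \<subseteq> A \<Longrightarrow> sum (f::_\<Rightarrow>ennreal) F \<le> infsum f A"
  unfolding ennreal_infsum_sup by (rule SUP_upper) auto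

lemma ennreal_infsum_mono: "(\<And>x. x\<in>A \<Longrightarrow> f x \<le> g x) \<Longrightarrow> infsum (f::_\<Rightarrow>ennreal) A \<le> infsum g A"
  by (rule infsum_mono[OF ennreal_summable ennreal_summable])

lemma ennreal_infsum_sum:
  fixes f :: "_ \<Rightarrow> _ \<Rightarrow> ennreal"
  shows "finite F \<Longrightarrow> sum (\<lambda>i. infsum (f i) A) F = infsum (\<lambda>x. sum (\<lambda>i. f i x) F) A"
  by (induct F rule: finite_induct) (auto simp: infsum_add[OF ennreal_summable ennreal_summable])

lemma ennreal_infsum_swap_le:
  fixes f :: "'a \<Rightarrow> 'b \<Rightarrow> ennreal"
  shows "infsum (\<lambda>i. infsum (\<lambda>x. f i x) B) A \<le> infsum (\<lambda>x. infsum (\<lambda>i. f i x) A) B"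
proof -
  have *: "sum (\<lambda>i. infsum (\<lambda>x. f i x) B) F \<le> infsum (\<lambda>x. infsum (\<lambda>i. f i x) A) B"
    if "finite F" "F \<subseteq> A" for F
  proof -
    have "sum (\<lambda>i. infsum (\<lambda>x. f i x) B) F = infsum (\<lambda>x. sum (\<lambda>i. f i x) F) B"
      using that(1) by (rule ennreal_infsum_sum)
    also have "\<dots> \<le> infsum (\<lambda>x. infsum (\<lambda>i. f i x) A) B"
      by (rule ennreal_infsum_mono) (rule ennreal_sum_le_infsum[OF that])
    finally show ?thesis .
  qed
  have eq: "infsum (\<lambda>i. infsum (\<lambda>x. f i x) B) A
     = (SUP F\<in>{F. finite F \<and> F \<subseteq> A}. sum (\<lambda>i. infsum (\<lambda>x. f i x) B) F)"
    by (rule ennreal_infsum_sup)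
  show ?thesis unfolding eq using * by (auto intro!: SUP_least)
qed

lemma ennreal_infsum_swap:
  fixes f :: "'a \<Rightarrow> 'b \<Rightarrow> ennreal"
  shows "infsum (\<lambda>i. infsum (\<lambda>x. f i x) B) A = infsum (\<lambda>x. infsum (\<lambda>i. f i x) A) B"
  by (rule antisym) (rule ennreal_infsum_swap_le)+

lemma ennreal_add_le: "ennreal (a+b) \<le> ennreal a + ennreal b"
  by (metis add.right_neutral add_0 add_le_same_cancel2 ennreal_leI
    ennreal_neg ennreal_plus le_add_same_cancel1 linorder_le_cases)

lemma ennreal_sum_le: "ennreal (sum x F) \<le> sum (\<lambda>i. ennreal (x i)) F"
proof (induct F rule: infinite_finite_induct)
  case (insert a F)
  then show ?case using ennreal_add_le[of "x a" "sum x F"]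
    by (simp add: order_trans add_left_mono)
qed auto

lemma ennreal_has_sum_le:
  fixes x :: "'a \<Rightarrow> real"
  assumes "(x has_sum w) I"
  shows "ennreal w \<le> infsum (\<lambda>i. ennreal (x i)) I"
proof -
  have lim: "((\<lambda>F. ennreal (sum x F)) \<longlongrightarrow> ennreal w) (finite_subsets_at_top I)"
    using assms unfolding has_sum_def by (rule tendsto_ennrealI)
  have ev: "\<forall>\<^sub>F F in finite_subsets_at_top I. ennreal (sum x F) \<le> infsum (\<lambda>i. ennreal (x i)) I"
  proof (rule eventually_finite_subsets_at_top_weakI)
    fix F assume F: "finite F" "F \<subseteq> I"
    have "ennreal (sum x F) \<le> sum (\<lambda>i. ennreal (x i)) F" by (rule ennreal_sum_le)
    also have "\<dots> \<le> infsum (\<lambda>i. ennreal (x i)) I" by (rule ennreal_sum_le_infsum[OF F])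
    finally show "ennreal (sum x F) \<le> infsum (\<lambda>i. ennreal (x i)) I" .
  qed
  show ?thesis by (rule tendsto_le[OF finite_subsets_at_top_neq_bot tendsto_const lim ev])
qed

lemma nat_infsum_ennreal:
  fixes h :: "'a \<Rightarrow> nat"
  shows "of_nat (infsum h I) \<le> infsum (\<lambda>i. of_nat (h i) :: ennreal) I"
    and "h summable_on I \<Longrightarrow> of_nat (infsum h I) = infsum (\<lambda>i. of_nat (h i) :: ennreal) I"
proof -
  show eq: "of_nat (infsum h I) = infsum (\<lambda>i. of_nat (h i) :: ennreal) I" if "h summable_on I"
  proof -
    have hs: "(h has_sum infsum h I) I" using that by (rule has_sum_infsum)
    have "((of_nat \<circ> h) has_sum (of_nat (infsum h I) :: ennreal)) I"
      apply (rule has_sum_comm_additive_general[OF _ _ hs])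
       apply (simp add: of_nat_sum)
      by (metis Lim_transform_within_open empty_iff insert_iff open_discrete tendsto_const)
    then show ?thesis by (simp add: infsumI o_def)
  qed
  show "of_nat (infsum h I) \<le> infsum (\<lambda>i. of_nat (h i) :: ennreal) I"
  proof (cases "h summable_on I")
    case True then show ?thesis using eq by simp
  next
    case False then show ?thesis by (simp add: infsum_not_exists)
  qed
qed



lemma md_exp_point:
  "md_exp (\<lambda>y. if P \<and> y = (q,a) then 1 else 0) g = (if P then ennreal q * g a else 0)"
proof -
  have "md_exp (\<lambda>y. if P \<and> y = (q,a) then 1 else 0) g
     = infsum (\<lambda>x. of_nat (if P \<and> x = (q,a) then 1 else 0) * ennreal (fst x) * g (snd x)) {(q,a)}"
    unfolding md_exp_def by (rule infsum_cong_neutral) auto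
  then show ?thesis by simp
qed

lemma md_exp_unit: "md_exp (md_unit a) g = g a"
proof -
  have "md_unit a = (\<lambda>y. if True \<and> y = (1,a) then 1 else 0)"
    by (auto simp: md_unit_def fun_eq_iff)
  then show ?thesis using md_exp_point[of True 1 a g] by simp
qed

lemma md_exp_add: "md_exp (\<lambda>y. m1 y + m2 y) g = md_exp m1 g + md_exp m2 g"
  unfolding md_exp_def
  by (simp add: distrib_right infsum_add[OF ennreal_summable ennreal_summable])

lemma md_exp_pair: "md_exp (md_pair p a b) g = ennreal p * g a + ennreal (1 - p) * g b"
proof -
  have "md_pair p a b = (\<lambda>y. (if p > 0 \<and> y = (p,a) then 1 else 0) + (if 1 - p > 0 \<and> y = (1-p,b) then 1 else 0))"
    by (auto simp: md_pair_def fun_eq_iff)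
  then show ?thesis by (simp add: md_exp_add md_exp_point ennreal_neg)
qed

lemma md_exp_scale:
  assumes "pp > 0"
  shows "infsum (\<lambda>x. of_nat (N (fst x / pp, snd x)) * ennreal (fst x) * g (snd x)) UNIV
         = ennreal pp * md_exp N g"
proof -
  have "infsum (\<lambda>x. of_nat (N (fst x / pp, snd x)) * ennreal (fst x) * g (snd x)) UNIV
      = infsum (\<lambda>y. of_nat (N y) * ennreal (pp * fst y) * g (snd y)) UNIV"
    by (rule infsum_reindex_bij_witness[of UNIV "\<lambda>y. (pp * fst y, snd y)" "\<lambda>x. (fst x / pp, snd x)"])
       (use assms in auto)
  also have "\<dots> = infsum (\<lambda>y. ennreal pp * (of_nat (N y) * ennreal (fst y) * g (snd y))) UNIV"
    using assms by (simp add: ennreal_mult' mult_ac)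
  also have "\<dots> = ennreal pp * md_exp N g"
    unfolding md_exp_def by (rule ennreal_infsum_cmult_left)
  finally show ?thesis .
qed

lemma md_exp_union:
  assumes "\<forall>i\<in>I. p i > 0"
  shows "md_exp (md_union I p N) g \<le> infsum (\<lambda>i. ennreal (p i) * md_exp (N i) g) I"
    and "(\<And>x. finite {i\<in>I. N i (fst x / p i, snd x) \<noteq> 0}) \<Longrightarrow>
         md_exp (md_union I p N) g = infsum (\<lambda>i. ennreal (p i) * md_exp (N i) g) I"
proof -
  have eq: "infsum (\<lambda>x. infsum (\<lambda>i. of_nat (N i (fst x / p i, snd x))) I * ennreal (fst x) * g (snd x)) UNIV
      = infsum (\<lambda>i. ennreal (p i) * md_exp (N i) g) I"
  proof -
    have "infsum (\<lambda>x. infsum (\<lambda>i. of_nat (N i (fst x / p i, snd x))) I * ennreal (fst x) * g (snd x)) UNIV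
       = infsum (\<lambda>x. infsum (\<lambda>i. of_nat (N i (fst x / p i, snd x)) * ennreal (fst x) * g (snd x)) I) UNIV"
      by (simp add: ennreal_infsum_cmult_right)
    also have "\<dots> = infsum (\<lambda>i. infsum (\<lambda>x. of_nat (N i (fst x / p i, snd x)) * ennreal (fst x) * g (snd x)) UNIV) I"
      by (rule ennreal_infsum_swap[symmetric])
    also have "\<dots> = infsum (\<lambda>i. ennreal (p i) * md_exp (N i) g) I"
      by (rule infsum_cong) (use assms in \<open>simp add: md_exp_scale\<close>)
    finally show ?thesis .
  qed
  have "md_exp (md_union I p N) g \<le> infsum (\<lambda>x. infsum (\<lambda>i. of_nat (N i (fst x / p i, snd x))) I * ennreal (fst x) * g (snd x)) UNIV"
    unfolding md_exp_def md_union_def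
    by (rule ennreal_infsum_mono) (auto intro!: mult_right_mono nat_infsum_ennreal(1) simp: case_prod_beta)
  then show "md_exp (md_union I p N) g \<le> infsum (\<lambda>i. ennreal (p i) * md_exp (N i) g) I"
    using eq by simp
  assume fin: "\<And>x. finite {i\<in>I. N i (fst x / p i, snd x) \<noteq> 0}"
  have sm: "(\<lambda>i. N i (fst x / p i, snd x)) summable_on I" for x
  proof -
    have "(\<lambda>i. N i (fst x / p i, snd x)) summable_on {i\<in>I. N i (fst x / p i, snd x) \<noteq> 0}"
      using fin by simp
    moreover have "(\<lambda>i. N i (fst x / p i, snd x)) summable_on {i\<in>I. N i (fst x / p i, snd x) \<noteq> 0}
       \<longleftrightarrow> (\<lambda>i. N i (fst x / p i, snd x)) summable_on I"
      by (rule summable_on_cong_neutral) auto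
    ultimately show ?thesis by blast
  qed
  have "md_exp (md_union I p N) g = infsum (\<lambda>x. infsum (\<lambda>i. of_nat (N i (fst x / p i, snd x))) I * ennreal (fst x) * g (snd x)) UNIV"
    unfolding md_exp_def md_union_def
    by (rule infsum_cong) (simp add: case_prod_beta nat_infsum_ennreal(2)[OF sm])
  then show "md_exp (md_union I p N) g = infsum (\<lambda>i. ennreal (p i) * md_exp (N i) g) I"
    using eq by simp
qed

lemma md_exp_map_inj:
  assumes "inj h"
  shows "md_exp (md_map h m) g = md_exp m (\<lambda>a. g (h a))"
proof -
  have mm1: "md_map h m (q, h a) = m (q, a)" for q a
  proof -
    have "{a'. h a' = h a} = {a}" using assms by (auto dest: injD)
    then show ?thesis by (simp add: md_map_def)
  qed
  have mm2: "md_map h m (q, b) = 0" if "b \<notin> range h" for q b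
  proof -
    have "{a'. h a' = b} = {}" using that by auto
    then show ?thesis by (simp add: md_map_def)
  qed
  let ?j = "\<lambda>(q::real,a). (q, h a)"
  have ij: "inj ?j" using assms by (auto simp: inj_def)
  have "md_exp (md_map h m) g = infsum (\<lambda>x. of_nat (md_map h m x) * ennreal (fst x) * g (snd x)) (range ?j)"
    unfolding md_exp_def by (rule infsum_cong_neutral) (auto simp: mm2 image_iff)
  also have "\<dots> = infsum ((\<lambda>x. of_nat (md_map h m x) * ennreal (fst x) * g (snd x)) \<circ> ?j) UNIV"
    by (rule infsum_reindex) (use ij in simp)
  also have "\<dots> = md_exp m (\<lambda>a. g (h a))"
    unfolding md_exp_def by (rule infsum_cong) (auto simp: mm1 case_prod_beta)
  finally show ?thesis .
qed



lemma et_mono: "mono (et c C)"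
proof (induction C)
  case Skip then show ?case by (intro monoI) simp
next
  case (Tick r) then show ?case by (intro monoI) (auto simp: le_fun_def intro: add_left_mono)
next
  case Halt then show ?case by (intro monoI) (simp add: le_fun_def)
next
  case (Assign x d) then show ?case
    by (intro monoI) (auto simp: le_fun_def intro!: ennreal_infsum_mono mult_left_mono)
next
  case (If \<psi> \<phi> C D)
  show ?case
  proof (intro monoI le_funI)
    fix f g :: "'a expect" and \<sigma> assume "f \<le> g"
    then have "et c C f \<sigma> \<le> et c C g \<sigma>" "et c D f \<sigma> \<le> et c D g \<sigma>"
      using monoD[OF If.IH(1) \<open>f \<le> g\<close>] monoD[OF If.IH(2) \<open>f \<le> g\<close>] by (auto simp: le_fun_def)
    then show "et c (If \<psi> \<phi> C D) f \<sigma> \<le> et c (If \<psi> \<phi> C D) g \<sigma>"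
      by (auto intro!: add_mono mult_left_mono)
  qed
next
  case (While \<psi> \<phi> C)
  show ?case
  proof (intro monoI)
    fix f g :: "'a expect" assume fg: "f \<le> g"
    show "et c (While \<psi> \<phi> C) f \<le> et c (While \<psi> \<phi> C) g"
      unfolding et.simps using fg
      by (intro lfp_mono) (auto simp: le_fun_def intro!: add_mono mult_left_mono)
  qed
next
  case (NDet C D)
  show ?case
  proof (intro monoI le_funI)
    fix f g :: "'a expect" and \<sigma> assume "f \<le> g"
    then have "et c C f \<sigma> \<le> et c C g \<sigma>" "et c D f \<sigma> \<le> et c D g \<sigma>"
      using monoD[OF NDet.IH(1) \<open>f \<le> g\<close>] monoD[OF NDet.IH(2) \<open>f \<le> g\<close>] by (auto simp: le_fun_def)
    then show "et c (NDet C D) f \<sigma> \<le> et c (NDet C D) g \<sigma>"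
      unfolding et.simps by (rule max.mono)
  qed
next
  case (PChoice C p D)
  show ?case
  proof (intro monoI le_funI)
    fix f g :: "'a expect" and \<sigma> assume "f \<le> g"
    then have "et c C f \<sigma> \<le> et c C g \<sigma>" "et c D f \<sigma> \<le> et c D g \<sigma>"
      using monoD[OF PChoice.IH(1) \<open>f \<le> g\<close>] monoD[OF PChoice.IH(2) \<open>f \<le> g\<close>] by (auto simp: le_fun_def)
    then show "et c (PChoice C p D) f \<sigma> \<le> et c (PChoice C p D) g \<sigma>"
      by (auto intro!: add_mono mult_left_mono)
  qed
next
  case (Seq C D)
  show ?case
  proof (intro monoI)
    fix f g :: "'a expect" assume "f \<le> g"
    then show "et c (Seq C D) f \<le> et c (Seq C D) g"
      using monoD[OF Seq.IH(1) monoD[OF Seq.IH(2) \<open>f \<le> g\<close>]] by simp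
  qed
qed

lemma et_while:
  "et c (While \<psi> \<phi> C) f \<sigma> =
     ind (\<psi> \<sigma> \<and> \<phi> \<sigma>) * et c C (et c (While \<psi> \<phi> C) f) \<sigma> + ind (\<psi> \<sigma> \<and> \<not> \<phi> \<sigma>) * f \<sigma>"
proof -
  let ?F = "\<lambda>F \<sigma>. ind (\<psi> \<sigma> \<and> \<phi> \<sigma>) * et c C F \<sigma> + ind (\<psi> \<sigma> \<and> \<not> \<phi> \<sigma>) * f \<sigma>"
  have m: "mono ?F" using et_mono[of c C]
    by (auto simp: mono_def le_fun_def intro!: add_mono mult_left_mono)
  have "lfp ?F = ?F (lfp ?F)" by (rule lfp_unfold[OF m])
  then show ?thesis by (simp add: fun_eq_iff)
qed

lemma kappa_inj: "inj (kappa D)"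
proof (rule injI)
  fix a b assume "kappa D a = kappa D b"
  moreover have "Seq C' D \<noteq> D" for C'
  proof
    assume "Seq C' D = D"
    then have "size (Seq C' D) = size D" by simp
    then show False by simp
  qed
  ultimately show "a = b"
    by (cases a; cases b) (auto simp: eq_commute[of D])
qed

lemma econf_kappa: "econf c f (kappa D a) = econf c (et c D f) a"
  by (cases a) auto

lemma cstep_sound: "cstep \<gamma> r \<mu> \<Longrightarrow> ind c * ennreal r + md_exp \<mu> (econf c f) \<le> econf c f \<gamma>"
proof (induction arbitrary: f rule: cstep.induct)
  case (assign x d \<sigma>)
  let ?j = "\<lambda>i. (pmf (d \<sigma>) i, Term (\<sigma>(x := i)))"
  let ?S = "{i. pmf (d \<sigma>) i > 0}"
  let ?m = "\<lambda>(q, a). card {i. pmf (d \<sigma>) i > 0 \<and> q = pmf (d \<sigma>) i \<and> a = Term (\<sigma>(x := i))}"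
  have inj: "inj ?j"
  proof (rule injI)
    fix i i' assume "?j i = ?j i'"
    then have "(\<sigma>(x := i)) x = (\<sigma>(x := i')) x" by simp
    then show "i = i'" by simp
  qed
  have m1: "?m (?j i) = 1" if "i \<in> ?S" for i
  proof -
    have "{i'. pmf (d \<sigma>) i' > 0 \<and> pmf (d \<sigma>) i = pmf (d \<sigma>) i' \<and> Term (\<sigma>(x := i)) = Term (\<sigma>(x := i'))} = {i}"
      using that inj by (auto dest: injD)
    then show ?thesis by simp
  qed
  have m1': "card {i'. 0 < pmf (d \<sigma>) i' \<and> pmf (d \<sigma>) i = pmf (d \<sigma>) i' \<and> \<sigma>(x := i) = \<sigma>(x := i')} = 1"
    if "0 < pmf (d \<sigma>) i" for i
  proof -
    have "{i'. 0 < pmf (d \<sigma>) i' \<and> pmf (d \<sigma>) i = pmf (d \<sigma>) i' \<and> \<sigma>(x := i) = \<sigma>(x := i')} = {i}"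
      using that by (auto dest: fun_cong[where x=x])
    then show ?thesis by simp
  qed
  have m0: "?m y = 0" if "y \<notin> ?j ` ?S" for y
  proof -
    obtain q a where y: "y = (q, a)" by (cases y)
    have E: "{i. pmf (d \<sigma>) i > 0 \<and> q = pmf (d \<sigma>) i \<and> a = Term (\<sigma>(x := i))} = {}"
      using that y by (auto simp: image_iff)
    show ?thesis unfolding y prod.case E by (rule card.empty)
  qed
  have "md_exp ?m (econf c f) = infsum (\<lambda>y. of_nat (?m y) * ennreal (fst y) * econf c f (snd y)) (?j ` ?S)"
    unfolding md_exp_def by (rule infsum_cong_neutral) (use m0 in auto)
  also have "\<dots> = infsum ((\<lambda>y. of_nat (?m y) * ennreal (fst y) * econf c f (snd y)) \<circ> ?j) ?S"
    by (rule infsum_reindex) (use inj in \<open>simp add: inj_on_def inj_def\<close>)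
  also have "\<dots> = infsum (\<lambda>i. ennreal (pmf (d \<sigma>) i) * f (\<sigma>(x := i))) ?S"
    by (rule infsum_cong) (simp add: m1')
  also have "\<dots> = infsum (\<lambda>i. ennreal (pmf (d \<sigma>) i) * f (\<sigma>(x := i))) UNIV"
    by (rule infsum_cong_neutral) (auto simp: ennreal_eq_0_iff not_less)
  finally show ?case by simp
next
  case (if_t \<psi> \<sigma> \<phi> C D) then show ?case by (simp add: md_exp_unit ind_def)
next
  case (if_f \<psi> \<sigma> \<phi> C D) then show ?case by (simp add: md_exp_unit ind_def)
next
  case (while_t \<psi> \<sigma> \<phi> C)
  have e1: "et c (While \<psi> \<phi> C) f \<sigma> = et c C (et c (While \<psi> \<phi> C) f) \<sigma>"
    using et_while[of c \<psi> \<phi> C f \<sigma>] while_t by (simp add: ind_def del: et.simps)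
  have e2: "econf c f (Active (Seq C (While \<psi> \<phi> C)) \<sigma>) = et c C (et c (While \<psi> \<phi> C) f) \<sigma>"
    by (simp only: econf.simps et.simps(9))
  show ?case unfolding md_exp_unit econf.simps by (simp only: et.simps(9) e1 ennreal_0 mult_zero_right add_0 order_refl)
next
  case (while_f \<psi> \<sigma> \<phi> C)
  have e1: "et c (While \<psi> \<phi> C) f \<sigma> = f \<sigma>"
    using et_while[of c \<psi> \<phi> C f \<sigma>] while_f by (simp add: ind_def del: et.simps)
  show ?case unfolding md_exp_unit econf.simps e1 by (simp add: ind_def)
next
  case (pchoice C p D \<sigma>) then show ?case by (simp add: md_exp_pair)
next
  case (seq C \<sigma> r \<mu> D)
  have "md_exp (md_map (kappa D) \<mu>) (econf c f) = md_exp \<mu> (econf c (et c D f))"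
    by (simp add: md_exp_map_inj[OF kappa_inj] econf_kappa)
  then show ?case using seq.IH[of "et c D f"] by simp
qed (simp_all add: md_exp_unit)



definition posq :: "'a md \<Rightarrow> bool" where
  "posq m \<longleftrightarrow> (\<forall>q a. m (q, a) > 0 \<longrightarrow> 0 < q \<and> q \<le> 1)"

lemma le_infsum_single:
  fixes p :: "nat \<Rightarrow> real"
  assumes "p summable_on I" "\<forall>i\<in>I. p i > 0" "i \<in> I"
  shows "p i \<le> infsum p I"
proof -
  have "sum p {i} \<le> infsum p I"
    by (rule finite_sum_le_infsum) (use assms in \<open>auto intro: less_imp_le\<close>)
  then show ?thesis by simp
qed

lemma finite_big:
  fixes p :: "nat \<Rightarrow> real"
  assumes "p summable_on I" "\<forall>i\<in>I. p i > 0" "q > 0"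
  shows "finite {i\<in>I. q \<le> p i}"
proof (rule ccontr)
  assume inf: "infinite {i\<in>I. q \<le> p i}"
  obtain n :: nat where n: "infsum p I / q < n" using reals_Archimedean2 by blast
  then have n': "infsum p I < n * q" using assms(3) by (simp add: divide_less_eq)
  obtain B where B: "finite B" "card B = n" "B \<subseteq> {i\<in>I. q \<le> p i}"
    using infinite_arbitrarily_large[OF inf] by blast
  have "n * q \<le> sum p B" using sum_bounded_below[of B q p] B by auto
  also have "sum p B \<le> infsum p I"
    by (rule finite_sum_le_infsum) (use assms B in \<open>auto intro: less_imp_le\<close>)
  finally show False using n' by simp
qed

lemma lstep_posq: "lstep \<mu> w \<nu> \<Longrightarrow> posq \<mu>"
proof (induction rule: lstep.induct)
  case (refl \<mu>) thus ?case by (auto simp: posq_def is_mdist_def)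
next
  case (single \<gamma> w \<mu>) thus ?case by (simp add: posq_def md_unit_def)
next
  case (union I M W N p w)
  show ?case unfolding posq_def
  proof (intro allI impI)
    fix q a assume "0 < md_union I p M (q,a)"
    then have "infsum (\<lambda>i. M i (q / p i, a)) I \<noteq> 0" by (simp add: md_union_def)
    have "\<exists>i\<in>I. M i (q / p i, a) \<noteq> 0"
    proof (rule ccontr)
      assume "\<not> (\<exists>i\<in>I. M i (q / p i, a) \<noteq> 0)"
      then have "infsum (\<lambda>i. M i (q / p i, a)) I = 0" by (intro infsum_0) auto
      with \<open>infsum (\<lambda>i. M i (q / p i, a)) I \<noteq> 0\<close> show False by simp
    qed
    then obtain i where i: "i \<in> I" "M i (q / p i, a) \<noteq> 0" by blast
    have pi: "p i > 0" using union(2) i by auto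
    have "posq (M i)" using union(1) i by auto
    then have qp: "0 < q / p i" "q / p i \<le> 1" using i(2) unfolding posq_def by auto
    have "p i \<le> infsum p I" using le_infsum_single[of p I i] union(2,3) i by auto
    moreover have "q \<le> p i" using qp(2) pi by (simp add: pos_divide_le_eq)
    moreover have "0 < q" using qp(1) pi by (simp add: zero_less_divide_iff)
    ultimately show "0 < q \<and> q \<le> 1" using union(4) by linarith
  qed
qed

lemma lstep_sound:
  "lstep \<mu> w \<nu> \<Longrightarrow> ind c * ennreal w + md_exp \<nu> (econf c f) \<le> md_exp \<mu> (econf c f)"
proof (induction rule: lstep.induct)
  case (refl \<mu>) thus ?case by simp
next
  case (single \<gamma> w \<mu>) thus ?case using cstep_sound[of \<gamma> w \<mu> c f] by (simp add: md_exp_unit)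
next
  case (union I M W N p w)
  let ?g = "econf c f"
  have pos: "\<forall>i\<in>I. p i > 0" using union(2) by auto
  have IH: "ind c * ennreal (W i) + md_exp (N i) ?g \<le> md_exp (M i) ?g" if "i \<in> I" for i
    using union(1) that by auto
  have fin: "finite {i\<in>I. M i (fst x / p i, snd x) \<noteq> 0}" for x
  proof (cases "fst x > 0")
    case True
    have "{i\<in>I. M i (fst x / p i, snd x) \<noteq> 0} \<subseteq> {i\<in>I. fst x \<le> p i}"
    proof
      fix i assume "i \<in> {i\<in>I. M i (fst x / p i, snd x) \<noteq> 0}"
      then have i: "i \<in> I" "M i (fst x / p i, snd x) \<noteq> 0" by auto
      have "posq (M i)" using union(1) i lstep_posq by auto
      then have "fst x / p i \<le> 1" using i(2) unfolding posq_def by (cases x) auto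
      then have "fst x \<le> p i" using pos i by (simp add: pos_divide_le_eq)
      then show "i \<in> {i\<in>I. fst x \<le> p i}" using i by simp
    qed
    moreover have "finite {i\<in>I. fst x \<le> p i}"
      using finite_big[OF union(3) pos True] by simp
    ultimately show ?thesis by (rule finite_subset)
  next
    case False
    have "{i\<in>I. M i (fst x / p i, snd x) \<noteq> 0} = {}"
    proof (rule ccontr)
      assume "{i\<in>I. M i (fst x / p i, snd x) \<noteq> 0} \<noteq> {}"
      then obtain i where i: "i \<in> I" "M i (fst x / p i, snd x) \<noteq> 0" by auto
      have "posq (M i)" using union(1) i lstep_posq by auto
      then have "0 < fst x / p i" using i(2) unfolding posq_def by (cases x) auto
      then show False using pos i False by (auto simp: zero_less_divide_iff)
    qed
    then show ?thesis by (metis finite.emptyI)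
  qed
  have wle: "ennreal w \<le> infsum (\<lambda>i. ennreal (p i) * ennreal (W i)) I"
  proof -
    have "ennreal w \<le> infsum (\<lambda>i. ennreal (p i * W i)) I"
      by (rule ennreal_has_sum_le) (rule union(5))
    also have "\<dots> = infsum (\<lambda>i. ennreal (p i) * ennreal (W i)) I"
      by (rule infsum_cong) (metis ennreal_mult' less_imp_le pos)
    finally show ?thesis .
  qed
  have "ind c * ennreal w + md_exp (md_union I p N) ?g
      \<le> ind c * infsum (\<lambda>i. ennreal (p i) * ennreal (W i)) I + infsum (\<lambda>i. ennreal (p i) * md_exp (N i) ?g) I"
    by (intro add_mono mult_left_mono wle md_exp_union(1) pos) simp
  also have "\<dots> = infsum (\<lambda>i. ennreal (p i) * (ind c * ennreal (W i) + md_exp (N i) ?g)) I"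
  proof -
    have e1: "ind c * infsum (\<lambda>i. ennreal (p i) * ennreal (W i)) I
        = infsum (\<lambda>i. ind c * (ennreal (p i) * ennreal (W i))) I"
      by (rule ennreal_infsum_cmult_left[symmetric])
    have e2: "infsum (\<lambda>i. ennreal (p i) * (ind c * ennreal (W i) + md_exp (N i) ?g)) I
        = infsum (\<lambda>i. ind c * (ennreal (p i) * ennreal (W i)) + ennreal (p i) * md_exp (N i) ?g) I"
      by (rule infsum_cong) (simp only: distrib_left mult.left_commute)
    show ?thesis unfolding e1 e2 by (rule infsum_add[OF ennreal_summable ennreal_summable, symmetric])
  qed
  also have "\<dots> \<le> infsum (\<lambda>i. ennreal (p i) * md_exp (M i) ?g) I"
    by (rule ennreal_infsum_mono) (use IH in \<open>auto intro: mult_left_mono\<close>)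
  also have "\<dots> = md_exp (md_union I p M) ?g"
    by (rule md_exp_union(2)[where I=I and p=p and N=M and g="econf c f", OF pos fin, symmetric])
  finally show ?case .
qed

theorem mainTheorem4:
  fixes \<mu> \<nu> :: "('v::finite) conf md" and w :: real and f :: "'v expect" and c :: bool
  assumes "mdist_conf \<mu>" and "mdist_conf \<nu>" and "w \<ge> 0" and "lstep \<mu> w \<nu>"
  shows "md_exp \<mu> (econf c f) \<ge> ind c * ennreal w + md_exp \<nu> (econf c f)"
  using lstep_sound[OF assms(4)] by simp

end
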